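(* Consider the problem $\min_{x\in\mathbb{R}^n}\max_{y\in\Delta}F(x)^Ty$ and suppose Assumption A and the strict complementarity assumption hold. Let $\{(x^t,y^t,z^t)\}$ be generated by Smoothed-GDA with parameters $c>0$, $\alpha>0$, $p>L$, $0<\beta\le1$, and suppose there is $R>0$ with $\|z^t\|\le R$. Then there exist $\delta>0$ and $\sigma_5>0$ such that whenever $$\max\{\|x^t-x^{t+1}\|,\ \|y^t-y^t_+(z^t)\|,\ \|x^{t+1}-z^t\|\}\le\delta,$$ we have $\|x(y^t_+(z^t),z^t)-x^*(z^t)\|\le\sigma_5\|y^t-y^t_+(z^t)\|$.
   Context: $F(x)=(f_1(x),\dots,f_m(x))^T$ smooth $\mathbb{R}^n\to\mathbb{R}^m$, $\Delta$ the probability simplex in $\mathbb{R}^m$, $f(x,y)=F(x)^Ty$. Assumption A: $\nabla_xf,\nabla_yf$ are $L$-Lipschitz ($L>0$) and $\max_if_i(x)$ is bounded below. KKT system for $(x^*,y^* )$ with multipliers $\mu,\nu$: $\sum_iy_i^*\nabla f_i(x^* )=0$, $\sum_iy_i^*=1$, $y_i^*\ge0$, $\mu-\nu_i=f_i(x^* )$, $\nu_i\ge0$, $\nu_iy_i^*=0$. Strict complementarity: every solution of the KKT system has $\nu_i>0$ whenever $y_i^*=0$. $K(x,z;y)=f(x,y)+\frac p2\|x-z\|^2$; $x(y,z)=\arg\min_{x}K(x,z;y)$; $x^*(z)=\arg\min_x\max_{y\in\Delta}K(x,z;y)$. Smoothed-GDA: $x^{t+1}=x^t-c\nabla_xK(x^t,z^t;y^t)$,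 $y^{t+1}=P_\Delta(y^t+\alpha\nabla_yK(x^{t+1},z^t;y^t))$, $z^{t+1}=z^t+\beta(x^{t+1}-z^t)$, with $P_\Delta$ Euclidean projection; $y^t_+(z^t)=P_\Delta(y^t+\alpha\nabla_yK(x(y^t,z^t),z^t;y^t))$. The constants $\delta,\sigma_5$ do not depend on $t$. *)

theory Defs
  imports "HOL-Analysis.Analysis"
begin

text \<open>Vectors: x in R^n is real^'n, y in R^m is real^'m. F :: real^'n => real^'m,
  f_i(x) = F x $ i. The gradient of f_i is given explicitly as G i.\<close>

definition prob_simplex :: "(real^('m::finite)) set" where
  "prob_simplex = {y. (\<forall>i. 0 \<le> y $ i) \<and> (\<Sum>i\<in>UNIV. y $ i) = 1}"

definition projS :: "real^'m \<Rightarrow> real^'m" where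
  "projS v = closest_point prob_simplex v"

definition fxy :: "(real^'n \<Rightarrow> real^'m) \<Rightarrow> real^'n \<Rightarrow> real^'m \<Rightarrow> real" where
  "fxy F x y = F x \<bullet> y"

definition Kfun :: "(real^'n \<Rightarrow> real^'m) \<Rightarrow> real \<Rightarrow> real^'n \<Rightarrow> real^'n \<Rightarrow> real^'m \<Rightarrow> real" where
  "Kfun F p x z y = fxy F x y + p / 2 * (norm (x - z))\<^sup>2"

definition gradx_f :: "('m \<Rightarrow> real^'n \<Rightarrow> real^'n) \<Rightarrow> real^'n \<Rightarrow> real^'m \<Rightarrow> real^'n" where
  "gradx_f G x y = (\<Sum>i\<in>UNIV. (y $ i) *\<^sub>R G i x)"

definition grady_f :: "(real^'n \<Rightarrow> real^'m) \<Rightarrow> real^'n \<Rightarrow> real^'m \<Rightarrow> real^'m" where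
  "grady_f F x y = F x"

definition gradx_K :: "('m \<Rightarrow> real^'n \<Rightarrow> real^'n) \<Rightarrow> real \<Rightarrow> real^'n \<Rightarrow> real^'n \<Rightarrow> real^'m \<Rightarrow> real^'n" where
  "gradx_K G p x z y = gradx_f G x y + p *\<^sub>R (x - z)"

definition grady_K :: "(real^'n \<Rightarrow> real^'m) \<Rightarrow> real \<Rightarrow> real^'n \<Rightarrow> real^'n \<Rightarrow> real^'m \<Rightarrow> real^'m" where
  "grady_K F p x z y = grady_f F x y"

definition xmin :: "(real^'n \<Rightarrow> real^'m) \<Rightarrow> real \<Rightarrow> real^'m \<Rightarrow> real^'n \<Rightarrow> real^'n" where
  "xmin F p y z = (THE x. \<forall>x'. Kfun F p x z y \<le> Kfun F p x' z y)"

definition xstar :: "(real^'n \<Rightarrow> real^'m) \<Rightarrow> real \<Rightarrow> real^'n \<Rightarrow> real^'n" where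
  "xstar F p z = (THE x. \<forall>x'. (SUP y\<in>prob_simplex. Kfun F p x z y) \<le> (SUP y\<in>prob_simplex. Kfun F p x' z y))"

definition KKT :: "(real^'n \<Rightarrow> real^'m) \<Rightarrow> ('m \<Rightarrow> real^'n \<Rightarrow> real^'n) \<Rightarrow> real^'n \<Rightarrow> real^'m \<Rightarrow> real \<Rightarrow> real^'m \<Rightarrow> bool" where
  "KKT F G xs ys mu nu \<longleftrightarrow>
     (\<Sum>i\<in>UNIV. (ys $ i) *\<^sub>R G i xs) = 0 \<and> (\<Sum>i\<in>UNIV. ys $ i) = 1 \<and> (\<forall>i. 0 \<le> ys $ i) \<and>
     (\<forall>i. mu - nu $ i = F xs $ i) \<and> (\<forall>i. 0 \<le> nu $ i) \<and> (\<forall>i. nu $ i * ys $ i = 0)"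

definition strict_complementarity :: "(real^'n \<Rightarrow> real^('m::finite)) \<Rightarrow> ('m \<Rightarrow> real^'n \<Rightarrow> real^'n) \<Rightarrow> bool" where
  "strict_complementarity F G \<longleftrightarrow>
     (\<forall>xs ys mu nu. KKT F G xs ys mu nu \<longrightarrow> (\<forall>i. ys $ i = 0 \<longrightarrow> nu $ i > 0))"

definition assumptionA :: "(real^'n \<Rightarrow> real^'m) \<Rightarrow> ('m \<Rightarrow> real^'n \<Rightarrow> real^'n) \<Rightarrow> real \<Rightarrow> bool" where
  "assumptionA F G L \<longleftrightarrow> L > 0 \<and>
     (\<forall>x y x' y'. y \<in> prob_simplex \<longrightarrow> y' \<in> prob_simplex \<longrightarrow>
        norm (gradx_f G x y - gradx_f G x' y') \<le> L * norm ((x, y) - (x', y'))) \<and>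
     (\<forall>x y x' y'. y \<in> prob_simplex \<longrightarrow> y' \<in> prob_simplex \<longrightarrow>
        norm (grady_f F x y - grady_f F x' y') \<le> L * norm ((x, y) - (x', y'))) \<and>
     (\<exists>B. \<forall>x. B \<le> Max (range (\<lambda>i. F x $ i)))"

end

theory Submission
  imports Defs
begin

lemma simplex_nonneg: "y \<in> prob_simplex \<Longrightarrow> 0 \<le> y $ i"
  by (simp add: prob_simplex_def)

lemma simplex_sum: "y \<in> prob_simplex \<Longrightarrow> (\<Sum>i\<in>UNIV. y $ i) = 1"
  by (simp add: prob_simplex_def)

lemma simplex_le1: "y \<in> prob_simplex \<Longrightarrow> y $ i \<le> 1"
proof -
  assume y: "y \<in> prob_simplex"
  have "y $ i \<le> (\<Sum>j\<in>UNIV. y $ j)"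
    by (rule member_le_sum) (auto simp: simplex_nonneg[OF y])
  then show ?thesis using simplex_sum[OF y] by simp
qed

lemma simplex_norm: "y \<in> prob_simplex \<Longrightarrow> norm y \<le> 1"
proof -
  assume y: "y \<in> prob_simplex"
  have "norm y \<le> (\<Sum>i\<in>UNIV. \<bar>y $ i\<bar>)" by (rule norm_le_l1_cart)
  also have "\<dots> = 1" using simplex_sum[OF y] simplex_nonneg[OF y] by simp
  finally show ?thesis .
qed

lemma simplex_nonempty: "(prob_simplex :: (real^'m::finite) set) \<noteq> {}"
proof -
  obtain a :: 'm where True by simp
  have "axis a 1 \<in> (prob_simplex :: (real^'m) set)"
    unfolding prob_simplex_def by (auto simp: axis_def)
  then show ?thesis by auto
qed

lemma simplex_closed: "closed prob_simplex"
proof -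
  have "prob_simplex = (\<Inter>i. {y::real^'m. 0 \<le> y $ i}) \<inter> {y. (\<Sum>i\<in>UNIV. y $ i) = 1}"
    unfolding prob_simplex_def by auto
  also have "closed \<dots>"
    by (intro closed_Int closed_INT ballI closed_Collect_le closed_Collect_eq continuous_intros) 
  finally show ?thesis .
qed

lemma simplex_convex: "convex prob_simplex"
  unfolding convex_def prob_simplex_def
  by (auto simp: sum.distrib sum_distrib_left[symmetric])

lemma simplex_bounded: "bounded prob_simplex"
  unfolding bounded_iff using simplex_norm by blast

lemma simplex_compact: "compact prob_simplex"
  using simplex_closed simplex_bounded by (simp add: compact_eq_bounded_closed)

lemma projS_in: "projS v \<in> prob_simplex"
  unfolding projS_def by (rule closest_point_in_set[OF simplex_closed simplex_nonempty])

lemma projS_dot: "w \<in> prob_simplex \<Longrightarrow> (v - projS v) \<bullet> (w - projS v) \<le> 0"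
  unfolding projS_def by (rule closest_point_dot[OF simplex_convex simplex_closed])

lemma projS_lip: "dist (projS v) (projS w) \<le> dist v w"
  unfolding projS_def by (rule closest_point_lipschitz[OF simplex_convex simplex_closed simplex_nonempty])

lemma projS_cont: "continuous_on S projS"
  unfolding projS_def by (rule continuous_on_closest_point[OF simplex_convex simplex_closed simplex_nonempty])


locale sgda =
  fixes F :: "real^'n \<Rightarrow> real^'m" and G :: "'m \<Rightarrow> real^'n \<Rightarrow> real^'n" and L p :: real
  assumes smooth: "\<And>i x. ((\<lambda>u. F u $ i) has_derivative (\<lambda>h. G i x \<bullet> h)) (at x)"
    and contgrad: "\<And>i. continuous_on UNIV (G i)"
    and A: "assumptionA F G L" and pL: "p > L"
begin

lemma Lpos: "L > 0" using A by (simp add: assumptionA_def)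
lemma ppos: "p > 0" using Lpos pL by simp

lemma norm_pair_same2: "norm ((x, y) - (x', y)) = norm (x - x')"
  by (simp add: norm_Pair)
lemma norm_pair_same1: "norm ((x, y) - (x, y')) = norm (y - y')"
  by (simp add: norm_Pair)

lemma gx_lip_x: "y \<in> prob_simplex \<Longrightarrow> norm (gradx_f G x y - gradx_f G x' y) \<le> L * norm (x - x')"
  using A unfolding assumptionA_def by (metis norm_pair_same2)

lemma gx_lip_y: "y \<in> prob_simplex \<Longrightarrow> y' \<in> prob_simplex \<Longrightarrow>
   norm (gradx_f G x y - gradx_f G x y') \<le> L * norm (y - y')"
  using A unfolding assumptionA_def by (metis norm_pair_same1)

lemma F_lip: "norm (F x - F x') \<le> L * norm (x - x')"
proof -
  obtain y :: "real^'m" where y: "y \<in> prob_simplex" using simplex_nonempty by blast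
  show ?thesis using A y unfolding assumptionA_def grady_f_def by (metis norm_pair_same2)
qed

lemma K_deriv: "((\<lambda>x. Kfun F p x z y) has_derivative (\<lambda>h. gradx_K G p x z y \<bullet> h)) (at x)"
proof -
  have 1: "((\<lambda>x. \<Sum>i\<in>UNIV. F x $ i * y $ i) has_derivative (\<lambda>h. \<Sum>i\<in>UNIV. (G i x \<bullet> h) * y $ i)) (at x)"
    by (intro has_derivative_sum has_derivative_mult_left smooth)
  have 2: "((\<lambda>x. (x - z) \<bullet> (x - z)) has_derivative (\<lambda>h. h \<bullet> (x - z) + (x - z) \<bullet> h)) (at x)"
    by (auto intro!: derivative_eq_intros)
  have 3: "((\<lambda>x. (\<Sum>i\<in>UNIV. F x $ i * y $ i) + p / 2 * ((x - z) \<bullet> (x - z))) has_derivative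
      (\<lambda>h. (\<Sum>i\<in>UNIV. (G i x \<bullet> h) * y $ i) + p / 2 * (h \<bullet> (x - z) + (x - z) \<bullet> h))) (at x)"
    by (intro has_derivative_add has_derivative_mult_right 1 2)
  have e1: "(\<lambda>x. Kfun F p x z y) = (\<lambda>x. (\<Sum>i\<in>UNIV. F x $ i * y $ i) + p / 2 * ((x - z) \<bullet> (x - z)))"
    by (auto simp: Kfun_def fxy_def inner_vec_def power2_norm_eq_inner)
  have e2: "(\<lambda>h. gradx_K G p x z y \<bullet> h) = (\<lambda>h. (\<Sum>i\<in>UNIV. (G i x \<bullet> h) * y $ i) + p / 2 * (h \<bullet> (x - z) + (x - z) \<bullet> h))"
    by (auto simp: gradx_K_def gradx_f_def inner_add_left inner_sum_left inner_sum_right inner_commute algebra_simps)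
  show ?thesis using 3 by (simp add: e1 e2)
qed

lemma strong_mono: assumes y: "y \<in> prob_simplex"
  shows "(p - L) * (norm (x - u))\<^sup>2 \<le> (gradx_K G p x z y - gradx_K G p u z y) \<bullet> (x - u)"
proof -
  have "\<bar>(gradx_f G x y - gradx_f G u y) \<bullet> (x - u)\<bar> \<le> norm (gradx_f G x y - gradx_f G u y) * norm (x - u)"
    by (rule Cauchy_Schwarz_ineq2)
  also have "\<dots> \<le> L * norm (x - u) * norm (x - u)"
    by (intro mult_right_mono gx_lip_x y) auto
  finally have a: "(gradx_f G x y - gradx_f G u y) \<bullet> (x - u) \<ge> - (L * (norm (x - u))\<^sup>2)"
    by (simp add: power2_eq_square)
  have "(gradx_K G p x z y - gradx_K G p u z y) \<bullet> (x - u) =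
     (gradx_f G x y - gradx_f G u y) \<bullet> (x - u) + p * (norm (x - u))\<^sup>2"
    by (simp add: gradx_K_def inner_diff_left inner_add_left power2_norm_eq_inner algebra_simps)
  with a show ?thesis by (simp add: algebra_simps)
qed

lemma strong_conv: assumes y: "y \<in> prob_simplex"
  shows "Kfun F p u z y \<ge> Kfun F p x z y + gradx_K G p x z y \<bullet> (u - x) + (p - L) / 2 * (norm (u - x))\<^sup>2"
proof -
  define d where "d = u - x"
  define g where "g = (\<lambda>w. gradx_K G p w z y)"
  define \<psi> where "\<psi> = (\<lambda>t::real. Kfun F p (x + t *\<^sub>R d) z y - t * (g x \<bullet> d) - (p - L) / 2 * t\<^sup>2 * (norm d)\<^sup>2)"
  have der: "(\<psi> has_real_derivative (g (x + t *\<^sub>R d) \<bullet> d - g x \<bullet> d - (p - L) * t * (norm d)\<^sup>2)) (at t)" for t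
  proof -
    have a: "((\<lambda>t. Kfun F p (x + t *\<^sub>R d) z y) has_derivative (\<lambda>s. g (x + t *\<^sub>R d) \<bullet> (s *\<^sub>R d))) (at t)"
      unfolding g_def
      by (rule has_derivative_compose[OF _ K_deriv]) (auto intro!: derivative_eq_intros)
    have b: "((\<lambda>t. Kfun F p (x + t *\<^sub>R d) z y) has_real_derivative (g (x + t *\<^sub>R d) \<bullet> d)) (at t)"
      by (rule has_derivative_imp_has_field_derivative[OF a]) simp
    show ?thesis unfolding \<psi>_def
      by (rule derivative_eq_intros b refl)+ (simp add: field_simps)
  qed
  have nn: "0 \<le> g (x + t *\<^sub>R d) \<bullet> d - g x \<bullet> d - (p - L) * t * (norm d)\<^sup>2" if t: "0 < t" for t
  proof -
    have "(p - L) * (norm ((x + t *\<^sub>R d) - x))\<^sup>2 \<le> (g (x + t *\<^sub>R d) - g x) \<bullet> ((x + t *\<^sub>R d) - x)"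
      unfolding g_def by (rule strong_mono[OF y])
    then have "(p - L) * (t * t * (norm d)\<^sup>2) \<le> t * ((g (x + t *\<^sub>R d) - g x) \<bullet> d)"
      using t by (simp add: power2_eq_square algebra_simps)
    then have "t * ((p - L) * t * (norm d)\<^sup>2) \<le> t * ((g (x + t *\<^sub>R d) - g x) \<bullet> d)"
      by (simp add: algebra_simps)
    then have "(p - L) * t * (norm d)\<^sup>2 \<le> (g (x + t *\<^sub>R d) - g x) \<bullet> d"
      using t by (simp add: mult_le_cancel_left_pos)
    then show ?thesis by (simp add: inner_diff_left)
  qed
  have "\<psi> 0 \<le> \<psi> 1"
  proof (rule DERIV_nonneg_imp_increasing_open[of 0 1])
    show "continuous_on {0..1} \<psi>"
      using der by (meson DERIV_continuous continuous_at_imp_continuous_on)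
  next
    fix t :: real assume "0 < t" "t < 1"
    then show "\<exists>y. (\<psi> has_real_derivative y) (at t) \<and> 0 \<le> y"
      using der nn by blast
  qed simp
  then show ?thesis
    by (simp add: \<psi>_def d_def g_def algebra_simps)
qed

end


context sgda begin

lemma stat_exists: assumes y: "y \<in> prob_simplex" shows "\<exists>x. gradx_K G p x z y = 0"
proof -
  define T where "T = (\<lambda>x. z - (1 / p) *\<^sub>R gradx_f G x y)"
  have "\<exists>!x. T x = x"
  proof (rule banach_fix_type[of "L / p"])
    show "0 \<le> L / p" using Lpos ppos by simp
    show "L / p < 1" using Lpos pL ppos by simp
    show "\<forall>x u. dist (T x) (T u) \<le> L / p * dist x u"
    proof (intro allI)
      fix x u
      have "dist (T x) (T u) = (1 / p) * norm (gradx_f G x y - gradx_f G u y)"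
        unfolding T_def dist_norm using ppos
        by (simp add: scaleR_diff_right[symmetric] norm_minus_commute)
      also have "\<dots> \<le> (1 / p) * (L * norm (x - u))"
        using gx_lip_x[OF y] ppos by (intro mult_left_mono) auto
      finally show "dist (T x) (T u) \<le> L / p * dist x u" by (simp add: dist_norm)
    qed
  qed
  then obtain x where x: "T x = x" by blast
  then have "p *\<^sub>R (T x - z) = p *\<^sub>R (x - z)" by simp
  then have "- gradx_f G x y = p *\<^sub>R (x - z)" unfolding T_def using ppos by simp
  then have "gradx_K G p x z y = 0" unfolding gradx_K_def by (simp add: algebra_simps)
  then show ?thesis by blast
qed

lemma stat_min: assumes y: "y \<in> prob_simplex" and g: "gradx_K G p x z y = 0"
  shows "Kfun F p u z y \<ge> Kfun F p x z y + (p - L) / 2 * (norm (u - x))\<^sup>2"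
  using strong_conv[OF y, where u=u and x=x and z=z] g by simp

lemma xmin_char: assumes y: "y \<in> prob_simplex" and g: "gradx_K G p x z y = 0"
  shows "xmin F p y z = x"
  unfolding xmin_def
proof (rule the_equality)
  show "\<forall>x'. Kfun F p x z y \<le> Kfun F p x' z y"
    using stat_min[OF y g] pL by (smt (verit) mult_nonneg_nonneg zero_le_power2 divide_nonneg_nonneg)
next
  fix x'' assume h: "\<forall>x'. Kfun F p x'' z y \<le> Kfun F p x' z y"
  have "(p - L) / 2 * (norm (x'' - x))\<^sup>2 \<le> 0"
    using h[rule_format, of x] stat_min[OF y g, of x''] by simp
  then have "(norm (x'' - x))\<^sup>2 \<le> 0" using pL
    by (simp add: mult_le_0_iff)
  then show "x'' = x" by simp
qed

lemma xmin_stat: assumes y: "y \<in> prob_simplex" shows "gradx_K G p (xmin F p y z) z y = 0"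
  using stat_exists[OF y, of z] xmin_char[OF y] by auto

lemma xmin_quad: assumes y: "y \<in> prob_simplex"
  shows "Kfun F p u z y \<ge> Kfun F p (xmin F p y z) z y + (p - L) / 2 * (norm (u - xmin F p y z))\<^sup>2"
  by (rule stat_min[OF y xmin_stat[OF y]])

lemma xmin_lip: assumes y: "y \<in> prob_simplex" and w: "w \<in> prob_simplex"
  shows "norm (xmin F p y z - xmin F p w z) \<le> L / (p - L) * norm (y - w)"
proof -
  define x u where "x = xmin F p y z" and "u = xmin F p w z"
  have gx: "gradx_K G p x z y = 0" and gu: "gradx_K G p u z w = 0"
    unfolding x_def u_def using xmin_stat y w by auto
  have "(p - L) * (norm (x - u))\<^sup>2 \<le> (gradx_K G p x z y - gradx_K G p u z y) \<bullet> (x - u)"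
    by (rule strong_mono[OF y])
  also have "\<dots> = (gradx_K G p u z w - gradx_K G p u z y) \<bullet> (x - u)" using gx gu by simp
  also have "\<dots> = (gradx_f G u w - gradx_f G u y) \<bullet> (x - u)" by (simp add: gradx_K_def)
  also have "\<dots> \<le> norm (gradx_f G u w - gradx_f G u y) * norm (x - u)"
    by (rule norm_cauchy_schwarz)
  also have "\<dots> \<le> L * norm (w - y) * norm (x - u)"
    by (intro mult_right_mono gx_lip_y w y) auto
  finally have h: "(p - L) * (norm (x - u))\<^sup>2 \<le> L * norm (y - w) * norm (x - u)"
    by (simp add: norm_minus_commute)
  show ?thesis
  proof (cases "norm (x - u) = 0")
    case True then show ?thesis using Lpos pL by (simp add: x_def u_def)
  next
    case False
    then have pos: "norm (x - u) > 0" by simp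
    from h have "((p - L) * norm (x - u)) * norm (x - u) \<le> (L * norm (y - w)) * norm (x - u)"
      by (simp add: power2_eq_square algebra_simps)
    then have "(p - L) * norm (x - u) \<le> L * norm (y - w)"
      using pos by simp
    then show ?thesis using pL unfolding x_def u_def by (simp add: field_simps)
  qed
qed

lemma xdist_grad: assumes y: "y \<in> prob_simplex"
  shows "(p - L) * norm (v - xmin F p y z) \<le> norm (gradx_K G p v z y)"
proof -
  define x where "x = xmin F p y z"
  have "(p - L) * (norm (v - x))\<^sup>2 \<le> (gradx_K G p v z y - gradx_K G p x z y) \<bullet> (v - x)"
    by (rule strong_mono[OF y])
  also have "\<dots> = gradx_K G p v z y \<bullet> (v - x)" using xmin_stat[OF y] by (simp add: x_def)
  also have "\<dots> \<le> norm (gradx_K G p v z y) * norm (v - x)" by (rule norm_cauchy_schwarz)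
  finally have h: "((p - L) * norm (v - x)) * norm (v - x) \<le> norm (gradx_K G p v z y) * norm (v - x)"
    by (simp add: power2_eq_square algebra_simps)
  show ?thesis
  proof (cases "norm (v - x) = 0")
    case True then show ?thesis by (simp add: x_def)
  next
    case False then show ?thesis using h by (simp add: x_def)
  qed
qed

lemma Kfun_expand: "Kfun F p x z y = F x \<bullet> y + p / 2 * (norm (x - z))\<^sup>2"
  by (simp add: Kfun_def fxy_def)

lemma mono_F: assumes y: "y \<in> prob_simplex" and w: "w \<in> prob_simplex"
  shows "(F (xmin F p y z) - F (xmin F p w z)) \<bullet> (y - w) \<le> - ((p - L) * (norm (xmin F p y z - xmin F p w z))\<^sup>2)"
proof -
  define x u where "x = xmin F p y z" and "u = xmin F p w z"
  have 1: "Kfun F p u z y \<ge> Kfun F p x z y + (p - L) / 2 * (norm (u - x))\<^sup>2"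
    unfolding x_def by (rule xmin_quad[OF y])
  have 2: "Kfun F p x z w \<ge> Kfun F p u z w + (p - L) / 2 * (norm (x - u))\<^sup>2"
    unfolding u_def by (rule xmin_quad[OF w])
  have n: "norm (u - x) = norm (x - u)" by (rule norm_minus_commute)
  have s: "Kfun F p u z y + Kfun F p x z w \<ge> Kfun F p x z y + Kfun F p u z w + (p - L) * (norm (x - u))\<^sup>2"
  proof -
    have eq: "(p - L) * (norm (x - u))\<^sup>2 = (p - L) / 2 * (norm (x - u))\<^sup>2 + (p - L) / 2 * (norm (x - u))\<^sup>2"
      by simp
    show ?thesis using 1[unfolded n] 2 eq by linarith
  qed
  then show ?thesis unfolding x_def[symmetric] u_def[symmetric]
    by (simp add: Kfun_expand inner_diff_left inner_diff_right inner_commute algebra_simps)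
qed

end


context sgda begin

lemma F_cont: "continuous_on S F"
  by (rule lipschitz_on_continuous_on[of L]) (auto intro!: lipschitz_onI simp: dist_norm F_lip less_imp_le[OF Lpos])

lemma xmin_cont: "continuous_on prob_simplex (\<lambda>y. xmin F p y z)"
proof (rule lipschitz_on_continuous_on[of "L / (p - L)"], rule lipschitz_onI)
  show "0 \<le> L / (p - L)" using Lpos pL by simp
  fix y w :: "real^'m" assume "y \<in> prob_simplex" "w \<in> prob_simplex"
  then show "dist (xmin F p y z) (xmin F p w z) \<le> L / (p - L) * dist y w"
    unfolding dist_norm by (rule xmin_lip)
qed

lemma dual_exists: "\<exists>y\<in>prob_simplex. projS (y + F (xmin F p y z)) = y"
proof (rule brouwer[OF simplex_compact simplex_convex simplex_nonempty])
  show "continuous_on prob_simplex (\<lambda>y. projS (y + F (xmin F p y z)))"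
    by (intro continuous_on_compose2[OF projS_cont] continuous_intros
        continuous_on_compose2[OF F_cont xmin_cont]) auto
  show "(\<lambda>y. projS (y + F (xmin F p y z))) \<in> prob_simplex \<rightarrow> prob_simplex"
    using projS_in by auto
qed blast

lemma dual_opt: assumes "projS (y + F x) = y" and "w \<in> prob_simplex"
  shows "F x \<bullet> w \<le> F x \<bullet> y"
  using projS_dot[OF assms(2), of "y + F x"] assms(1) by (simp add: inner_diff_right)

lemma opt_support: assumes y: "y \<in> prob_simplex" and opt: "\<forall>w\<in>prob_simplex. v \<bullet> w \<le> v \<bullet> y"
  and pos: "y $ i > 0" shows "v $ j \<le> v $ i"
proof (rule ccontr)
  assume c: "\<not> v $ j \<le> v $ i"
  then have ji: "j \<noteq> i" by auto
  define w where "w = y + (y $ i) *\<^sub>R (axis j 1 - axis i 1)"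
  have wc: "w $ k = y $ k + (if k = j then y $ i else 0) - (if k = i then y $ i else 0)" for k
    by (simp add: w_def axis_def algebra_simps)
  have "w \<in> prob_simplex"
    unfolding prob_simplex_def
  proof (intro CollectI conjI allI)
    fix k show "0 \<le> w $ k" using simplex_nonneg[OF y, of k] simplex_nonneg[OF y, of i] ji
      by (auto simp: wc)
  next
    have "(\<Sum>k\<in>UNIV. w $ k) = (\<Sum>k\<in>UNIV. y $ k) + (\<Sum>k\<in>UNIV. (if k = j then y $ i else 0)) - (\<Sum>k\<in>UNIV. (if k = i then y $ i else 0))"
      by (simp add: wc sum.distrib sum_subtractf)
    then show "(\<Sum>k\<in>UNIV. w $ k) = 1" using simplex_sum[OF y] by simp
  qed
  then have "v \<bullet> w \<le> v \<bullet> y" using opt by blast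
  moreover have "v \<bullet> w = v \<bullet> y + y $ i * (v $ j - v $ i)"
    by (simp add: w_def inner_add_right inner_diff_right inner_axis algebra_simps)
  moreover have "y $ i * (v $ j - v $ i) > 0" using pos c by simp
  ultimately show False by simp
qed

lemma K_bdd: "bdd_above ((\<lambda>w. Kfun F p x z w) ` prob_simplex)"
proof (rule bdd_aboveI2)
  fix w :: "real^'m" assume w: "w \<in> prob_simplex"
  have "F x \<bullet> w \<le> norm (F x) * norm w" by (rule norm_cauchy_schwarz)
  also have "\<dots> \<le> norm (F x) * 1" by (intro mult_left_mono simplex_norm w) auto
  finally show "Kfun F p x z w \<le> norm (F x) + p / 2 * (norm (x - z))\<^sup>2"
    by (simp add: Kfun_expand)
qed

lemma xstar_char: assumes y: "y \<in> prob_simplex"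
  and opt: "\<forall>w\<in>prob_simplex. F (xmin F p y z) \<bullet> w \<le> F (xmin F p y z) \<bullet> y"
  shows "xstar F p z = xmin F p y z"
proof -
  define x where "x = xmin F p y z"
  define S where "S = (\<lambda>u. SUP w\<in>prob_simplex. Kfun F p u z w)"
  have Sx: "S x = Kfun F p x z y"
    unfolding S_def
  proof (rule cSup_eq_maximum)
    show "Kfun F p x z y \<in> (\<lambda>w. Kfun F p x z w) ` prob_simplex" using y by blast
    fix k assume "k \<in> (\<lambda>w. Kfun F p x z w) ` prob_simplex"
    then obtain w where w: "w \<in> prob_simplex" "k = Kfun F p x z w" by blast
    then show "k \<le> Kfun F p x z y" using opt by (simp add: Kfun_expand x_def)
  qed
  have Su: "S u \<ge> S x + (p - L) / 2 * (norm (u - x))\<^sup>2" for u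
  proof -
    have "Kfun F p u z y \<le> S u" unfolding S_def by (rule cSUP_upper[OF y K_bdd])
    moreover have "Kfun F p u z y \<ge> Kfun F p x z y + (p - L) / 2 * (norm (u - x))\<^sup>2"
      unfolding x_def by (rule xmin_quad[OF y])
    ultimately show ?thesis using Sx by simp
  qed
  have xs: "xstar F p z = (THE x. \<forall>x'. S x \<le> S x')" by (simp add: xstar_def S_def)
  show ?thesis unfolding xs x_def[symmetric]
  proof (rule the_equality)
    show "\<forall>x'. S x \<le> S x'" using Su pL
      by (smt (verit) mult_nonneg_nonneg zero_le_power2 divide_nonneg_nonneg)
  next
    fix x'' assume h: "\<forall>x'. S x'' \<le> S x'"
    have "(p - L) / 2 * (norm (x'' - x))\<^sup>2 \<le> 0"
      using h[rule_format, of x] Su[of x''] by simp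
    then have "(norm (x'' - x))\<^sup>2 \<le> 0" using pL by (simp add: mult_le_0_iff)
    then show "x'' = x" by simp
  qed
qed

lemma dual_sol: "\<exists>y\<in>prob_simplex. (\<forall>w\<in>prob_simplex. F (xmin F p y z) \<bullet> w \<le> F (xmin F p y z) \<bullet> y)
   \<and> xstar F p z = xmin F p y z"
proof -
  obtain y where y: "y \<in> prob_simplex" "projS (y + F (xmin F p y z)) = y"
    using dual_exists by blast
  have opt: "\<forall>w\<in>prob_simplex. F (xmin F p y z) \<bullet> w \<le> F (xmin F p y z) \<bullet> y"
    using dual_opt[OF y(2)] by blast
  show ?thesis using y(1) opt xstar_char[OF y(1) opt] by blast
qed

end


lemma sc_contra:
  fixes F :: "real^'n \<Rightarrow> real^'m" and G :: "'m \<Rightarrow> real^'n \<Rightarrow> real^'n"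
  assumes SC: "strict_complementarity F G"
    and y: "y \<in> prob_simplex" and gy: "(\<Sum>i\<in>UNIV. y $ i *\<^sub>R G i x) = 0"
    and sy: "\<And>i j. y $ i > 0 \<Longrightarrow> F x $ j \<le> F x $ i"
    and v0: "v \<noteq> 0" and gv: "(\<Sum>i\<in>UNIV. v $ i *\<^sub>R G i x) = 0" and sv0: "(\<Sum>i\<in>UNIV. v $ i) = 0"
    and sv: "\<And>i j. v $ i \<noteq> 0 \<Longrightarrow> F x $ j \<le> F x $ i"
  shows False
proof -
  define N where "N = {i. v $ i < 0}"
  have Nne: "N \<noteq> {}"
  proof
    assume "N = {}"
    then have nn: "\<forall>i. 0 \<le> v $ i" by (auto simp: N_def not_less)
    then have "\<forall>i\<in>UNIV. v $ i = 0" using sv0 sum_nonneg_eq_0_iff[of UNIV "\<lambda>i. v $ i"] by auto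
    then have "v = 0" by (simp add: vec_eq_iff)
    with v0 show False by simp
  qed
  define q where "q = (\<lambda>i. y $ i / (- v $ i))"
  define s where "s = Min (q ` N)"
  have fin: "finite (q ` N)" by simp
  have "s \<in> q ` N" unfolding s_def using Nne by (intro Min_in fin) auto
  then obtain i0 where i0: "i0 \<in> N" "s = q i0" by blast
  have sle: "s \<le> q i" if "i \<in> N" for i unfolding s_def using that by (intro Min_le fin) auto
  have vi0: "v $ i0 < 0" using i0 by (simp add: N_def)
  have s0: "s \<ge> 0" using i0 vi0 simplex_nonneg[OF y, of i0] by (simp add: q_def divide_nonneg_neg)
  define y2 where "y2 = y + s *\<^sub>R v"
  define mu where "mu = F x $ i0"
  define nu where "nu = (\<chi> i. mu - F x $ i)"
  have y2i0: "y2 $ i0 = 0" using vi0 by (simp add: y2_def i0(2) q_def)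
  have nui0: "nu $ i0 = 0" by (simp add: nu_def mu_def)
  have maxi0: "F x $ j \<le> mu" for j using sv[of i0 j] vi0 by (simp add: mu_def)
  have "KKT F G x y2 mu nu"
    unfolding KKT_def
  proof (intro conjI allI)
    show "(\<Sum>i\<in>UNIV. y2 $ i *\<^sub>R G i x) = 0"
    proof -
      have "(\<Sum>i\<in>UNIV. (s * v $ i) *\<^sub>R G i x) = s *\<^sub>R (\<Sum>i\<in>UNIV. v $ i *\<^sub>R G i x)"
        by (simp add: scaleR_sum_right)
      then show ?thesis using gy gv by (simp add: y2_def scaleR_add_left sum.distrib)
    qed
    show "(\<Sum>i\<in>UNIV. y2 $ i) = 1"
      using simplex_sum[OF y] sv0 by (simp add: y2_def sum.distrib sum_distrib_left[symmetric])
    fix i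
    show "0 \<le> y2 $ i"
    proof (cases "v $ i < 0")
      case True
      then have "s \<le> y $ i / (- v $ i)" using sle[of i] by (simp add: N_def q_def)
      then have "s * (- v $ i) \<le> y $ i" using True pos_le_divide_eq[of "- v $ i" s "y $ i"] by simp
      then show ?thesis by (simp add: y2_def algebra_simps)
    next
      case False
      then show ?thesis using s0 simplex_nonneg[OF y, of i] by (simp add: y2_def)
    qed
    show "mu - nu $ i = F x $ i" by (simp add: nu_def)
    show "0 \<le> nu $ i" using maxi0[of i] by (simp add: nu_def)
    show "nu $ i * y2 $ i = 0"
    proof (cases "y2 $ i = 0")
      case False
      then have "y $ i \<noteq> 0 \<or> v $ i \<noteq> 0" by (auto simp: y2_def)
      then have "mu \<le> F x $ i"
      proof
        assume "y $ i \<noteq> 0"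
        then have "y $ i > 0" using simplex_nonneg[OF y, of i] by simp
        then show ?thesis using sy unfolding mu_def by blast
      next
        assume "v $ i \<noteq> 0" then show ?thesis using sv unfolding mu_def by blast
      qed
      then have "nu $ i = 0" using maxi0[of i] by (simp add: nu_def)
      then show ?thesis by simp
    qed simp
  qed
  then have "nu $ i0 > 0" using SC y2i0 unfolding strict_complementarity_def by blast
  with nui0 show False by simp
qed


context sgda begin

lemma licq:
  assumes SC: "strict_complementarity F G"
  shows "\<exists>\<theta>>0. \<exists>\<eta>>0. \<exists>\<kappa>>0. \<forall>x y u. norm x \<le> R \<longrightarrow> y \<in> prob_simplex \<longrightarrow>
     (\<forall>i j. y $ i > 0 \<longrightarrow> F x $ j \<le> F x $ i) \<longrightarrow> norm (\<Sum>i\<in>UNIV. y $ i *\<^sub>R G i x) \<le> \<theta> \<longrightarrow>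
     (\<forall>i j. u $ i \<noteq> 0 \<longrightarrow> F x $ j - \<eta> \<le> F x $ i) \<longrightarrow>
     \<kappa> * norm u \<le> norm (\<Sum>i\<in>UNIV. u $ i *\<^sub>R G i x) + \<bar>\<Sum>i\<in>UNIV. u $ i\<bar>"
proof (rule ccontr)
  assume neg: "\<not> ?thesis"
  define e where "e = (\<lambda>k::nat. inverse (real (Suc k)))"
  have epos: "e k > 0" for k by (simp add: e_def)
  define P where "P = (\<lambda>k x y u. norm x \<le> R \<and> y \<in> prob_simplex \<and>
     (\<forall>i j. y $ i > 0 \<longrightarrow> F x $ j \<le> F x $ i) \<and> norm (\<Sum>i\<in>UNIV. y $ i *\<^sub>R G i x) \<le> e k \<and>
     (\<forall>i j. u $ i \<noteq> 0 \<longrightarrow> F x $ j - e k \<le> F x $ i) \<and>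
     e k * norm u > norm (\<Sum>i\<in>UNIV. u $ i *\<^sub>R G i x) + \<bar>\<Sum>i\<in>UNIV. u $ i\<bar>)"
  have ex: "\<forall>k. \<exists>x y u. P k x y u"
  proof
    fix k
    show "\<exists>x y u. P k x y u"
    proof (rule ccontr)
      assume nP: "\<not> (\<exists>x y u. P k x y u)"
      have all: "\<forall>x y u. norm x \<le> R \<longrightarrow> y \<in> prob_simplex \<longrightarrow>
         (\<forall>i j. y $ i > 0 \<longrightarrow> F x $ j \<le> F x $ i) \<longrightarrow> norm (\<Sum>i\<in>UNIV. y $ i *\<^sub>R G i x) \<le> e k \<longrightarrow>
         (\<forall>i j. u $ i \<noteq> 0 \<longrightarrow> F x $ j - e k \<le> F x $ i) \<longrightarrow>
         e k * norm u \<le> norm (\<Sum>i\<in>UNIV. u $ i *\<^sub>R G i x) + \<bar>\<Sum>i\<in>UNIV. u $ i\<bar>"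
      proof (intro allI impI)
        fix x y and u :: "real^'m" assume a: "norm x \<le> R" "y \<in> prob_simplex" "\<forall>i j. y $ i > 0 \<longrightarrow> F x $ j \<le> F x $ i"
          "norm (\<Sum>i\<in>UNIV. y $ i *\<^sub>R G i x) \<le> e k" "\<forall>i j. u $ i \<noteq> 0 \<longrightarrow> F x $ j - e k \<le> F x $ i"
        show "e k * norm u \<le> norm (\<Sum>i\<in>UNIV. u $ i *\<^sub>R G i x) + \<bar>\<Sum>i\<in>UNIV. u $ i\<bar>"
        proof (rule ccontr)
          assume "\<not> ?thesis"
          then have "P k x y u" unfolding P_def using a by (simp add: not_le)
          with nP show False by blast
        qed
      qed
      have "\<exists>\<theta>>0. \<exists>\<eta>>0. \<exists>\<kappa>>0. \<forall>x y u. norm x \<le> R \<longrightarrow> y \<in> prob_simplex \<longrightarrow>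
       (\<forall>i j. y $ i > 0 \<longrightarrow> F x $ j \<le> F x $ i) \<longrightarrow> norm (\<Sum>i\<in>UNIV. y $ i *\<^sub>R G i x) \<le> \<theta> \<longrightarrow>
       (\<forall>i j. u $ i \<noteq> 0 \<longrightarrow> F x $ j - \<eta> \<le> F x $ i) \<longrightarrow>
       \<kappa> * norm u \<le> norm (\<Sum>i\<in>UNIV. u $ i *\<^sub>R G i x) + \<bar>\<Sum>i\<in>UNIV. u $ i\<bar>"
        by (rule exI[of _ "e k"], rule conjI[OF epos], rule exI[of _ "e k"], rule conjI[OF epos],
            rule exI[of _ "e k"], rule conjI[OF epos], rule all)
      with neg show False by blast
    qed
  qed
  obtain X where hX: "\<forall>k. \<exists>y u. P k (X k) y u" using choice[OF ex] by blast
  obtain Y where hY: "\<forall>k. \<exists>u. P k (X k) (Y k) u" using choice[OF hX] by blast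
  obtain U where hU: "\<forall>k. P k (X k) (Y k) (U k)" using choice[OF hY] by blast
  have H1: "norm (X k) \<le> R" and H2: "Y k \<in> prob_simplex"
    and H3: "\<And>i j. Y k $ i > 0 \<Longrightarrow> F (X k) $ j \<le> F (X k) $ i"
    and H4: "norm (\<Sum>i\<in>UNIV. Y k $ i *\<^sub>R G i (X k)) \<le> e k"
    and H5: "\<And>i j. U k $ i \<noteq> 0 \<Longrightarrow> F (X k) $ j - e k \<le> F (X k) $ i"
    and H6: "e k * norm (U k) > norm (\<Sum>i\<in>UNIV. U k $ i *\<^sub>R G i (X k)) + \<bar>\<Sum>i\<in>UNIV. U k $ i\<bar>" for k
    using hU[rule_format, of k] unfolding P_def by blast+
  have U0: "U k \<noteq> 0" for k using H6[of k] by auto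
  define V where "V = (\<lambda>k. (1 / norm (U k)) *\<^sub>R U k)"
  have nV: "norm (V k) = 1" for k using U0[of k] by (simp add: V_def)
  have Vnz: "V k $ i \<noteq> 0 \<longleftrightarrow> U k $ i \<noteq> 0" for k i using U0[of k] by (simp add: V_def)
  have HV: "e k > norm (\<Sum>i\<in>UNIV. V k $ i *\<^sub>R G i (X k)) + \<bar>\<Sum>i\<in>UNIV. V k $ i\<bar>" for k
  proof -
    define n where "n = norm (U k)"
    have n: "n > 0" using U0[of k] by (simp add: n_def)
    have a: "(\<Sum>i\<in>UNIV. V k $ i *\<^sub>R G i (X k)) = (1 / n) *\<^sub>R (\<Sum>i\<in>UNIV. U k $ i *\<^sub>R G i (X k))"
      by (simp add: V_def n_def scaleR_sum_right)
    have b: "(\<Sum>i\<in>UNIV. V k $ i) = (1 / n) * (\<Sum>i\<in>UNIV. U k $ i)"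
      by (simp add: V_def n_def sum_distrib_left)
    have "e k * n > norm (\<Sum>i\<in>UNIV. U k $ i *\<^sub>R G i (X k)) + \<bar>\<Sum>i\<in>UNIV. U k $ i\<bar>"
      using H6[of k] by (simp add: n_def)
    then have "e k > (norm (\<Sum>i\<in>UNIV. U k $ i *\<^sub>R G i (X k)) + \<bar>\<Sum>i\<in>UNIV. U k $ i\<bar>) / n"
      using n by (simp add: divide_less_eq)
    then show ?thesis using n by (simp add: a b add_divide_distrib abs_mult)
  qed
  define W where "W = (\<lambda>k. (X k, (Y k, V k)))"
  have Win: "\<forall>k. W k \<in> cball 0 R \<times> (prob_simplex \<times> sphere 0 1)"
    using H1 H2 nV by (auto simp: W_def)
  have cpt: "compact (cball (0::real^'n) R \<times> (prob_simplex \<times> sphere (0::real^'m) 1))"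
    by (intro compact_Times compact_cball simplex_compact compact_sphere)
  obtain l r where lin: "l \<in> cball 0 R \<times> (prob_simplex \<times> sphere 0 1)" and r: "strict_mono r"
    and lim: "(W \<circ> r) \<longlonglongrightarrow> l"
    using seq_compactE[OF compact_imp_seq_compact[OF cpt] Win] by blast
  obtain xb yb vb where l: "l = (xb, (yb, vb))" by (metis prod.collapse)
  have yb: "yb \<in> prob_simplex" and nvb: "norm vb = 1" using lin l by auto
  have Xl: "(\<lambda>k. X (r k)) \<longlonglongrightarrow> xb" using tendsto_fst[OF lim] by (simp add: l W_def o_def)
  have Yl: "(\<lambda>k. Y (r k)) \<longlonglongrightarrow> yb" using tendsto_fst[OF tendsto_snd[OF lim]] by (simp add: l W_def o_def)
  have Vl: "(\<lambda>k. V (r k)) \<longlonglongrightarrow> vb" using tendsto_snd[OF tendsto_snd[OF lim]] by (simp add: l W_def o_def)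
  have el: "(\<lambda>k. e (r k)) \<longlonglongrightarrow> 0"
    using LIMSEQ_subseq_LIMSEQ[OF LIMSEQ_inverse_real_of_nat r] by (simp add: e_def o_def)
  have Gl: "(\<lambda>k. G i (X (r k))) \<longlonglongrightarrow> G i xb" for i
  proof -
    have "isCont (G i) xb" using contgrad[of i] by (simp add: continuous_on_eq_continuous_at)
    then show ?thesis using isCont_tendsto_compose Xl by blast
  qed
  have Fl: "(\<lambda>k. F (X (r k)) $ j) \<longlonglongrightarrow> F xb $ j" for j
  proof -
    have "isCont F xb" using F_cont[of UNIV] by (simp add: continuous_on_eq_continuous_at)
    then have "(\<lambda>k. F (X (r k))) \<longlonglongrightarrow> F xb" using isCont_tendsto_compose Xl by blast
    then show ?thesis by (rule tendsto_vec_nth)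
  qed
  have gy: "(\<Sum>i\<in>UNIV. yb $ i *\<^sub>R G i xb) = 0"
  proof -
    have "(\<lambda>k. norm (\<Sum>i\<in>UNIV. Y (r k) $ i *\<^sub>R G i (X (r k)))) \<longlonglongrightarrow> norm (\<Sum>i\<in>UNIV. yb $ i *\<^sub>R G i xb)"
      by (intro tendsto_intros Gl Yl)
    then have "norm (\<Sum>i\<in>UNIV. yb $ i *\<^sub>R G i xb) \<le> 0"
      by (rule tendsto_le[OF trivial_limit_sequentially el]) (use H4 in auto)
    then show ?thesis by simp
  qed
  have gv: "(\<Sum>i\<in>UNIV. vb $ i *\<^sub>R G i xb) = 0" and sv0: "(\<Sum>i\<in>UNIV. vb $ i) = 0"
  proof -
    have "(\<lambda>k. norm (\<Sum>i\<in>UNIV. V (r k) $ i *\<^sub>R G i (X (r k))) + \<bar>\<Sum>i\<in>UNIV. V (r k) $ i\<bar>) \<longlonglongrightarrow>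
       norm (\<Sum>i\<in>UNIV. vb $ i *\<^sub>R G i xb) + \<bar>\<Sum>i\<in>UNIV. vb $ i\<bar>"
      by (intro tendsto_intros Gl Vl)
    then have "norm (\<Sum>i\<in>UNIV. vb $ i *\<^sub>R G i xb) + \<bar>\<Sum>i\<in>UNIV. vb $ i\<bar> \<le> 0"
      by (rule tendsto_le[OF trivial_limit_sequentially el]) (use HV in \<open>simp add: less_imp_le\<close>)
    then show "(\<Sum>i\<in>UNIV. vb $ i *\<^sub>R G i xb) = 0" "(\<Sum>i\<in>UNIV. vb $ i) = 0"
      by (smt (verit) norm_ge_zero norm_le_zero_iff abs_ge_zero)+
  qed
  have sy: "F xb $ j \<le> F xb $ i" if pos: "yb $ i > 0" for i j
  proof -
    have "(\<lambda>k. Y (r k) $ i) \<longlonglongrightarrow> yb $ i" by (rule tendsto_vec_nth[OF Yl])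
    then have ev: "eventually (\<lambda>k. Y (r k) $ i > 0) sequentially"
      using pos order_tendstoD(1) by blast
    show ?thesis
      by (rule tendsto_le[OF trivial_limit_sequentially Fl Fl]) (use ev H3 in \<open>auto elim: eventually_mono\<close>)
  qed
  have sv: "F xb $ j \<le> F xb $ i" if nz: "vb $ i \<noteq> 0" for i j
  proof -
    have "(\<lambda>k. V (r k) $ i) \<longlonglongrightarrow> vb $ i" by (rule tendsto_vec_nth[OF Vl])
    then have ev: "eventually (\<lambda>k. V (r k) $ i \<noteq> 0) sequentially"
      using nz tendsto_imp_eventually_ne by blast
    have l2: "(\<lambda>k. F (X (r k)) $ j - e (r k)) \<longlonglongrightarrow> F xb $ j - 0"
      by (intro tendsto_intros Fl el)
    have "F xb $ j - 0 \<le> F xb $ i"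
      by (rule tendsto_le[OF trivial_limit_sequentially Fl l2]) (use eventually_mono[OF ev] H5 Vnz in simp)
    then show ?thesis by simp
  qed
  have vb0: "vb \<noteq> 0" using nvb by auto
  show False
    by (rule sc_contra[OF SC yb gy _ vb0 gv sv0]) (use sy sv in auto)
qed

end


lemma arith_rough:
  fixes e r T b1 b2 \<epsilon> :: real
  assumes e: "0 \<le> e" and r: "0 \<le> r" and T: "0 < T" and b1: "0 \<le> b1" and b2: "0 \<le> b2"
    and re: "r \<le> \<epsilon>" and h2: "b2 * \<epsilon> \<le> T / 4" and h1: "b1 * \<epsilon> \<le> T\<^sup>2 / 8"
    and q: "e\<^sup>2 \<le> b1 * r + b2 * r * e"
  shows "e \<le> T / 2"
proof (rule ccontr)
  assume "\<not> e \<le> T / 2"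
  then have eT: "e > T / 2" by simp
  have "b1 * r \<le> b1 * \<epsilon>" using re b1 by (rule mult_left_mono)
  also have "\<dots> \<le> T\<^sup>2 / 8" by (rule h1)
  also have "\<dots> < e\<^sup>2 / 2"
  proof -
    have "(T / 2)\<^sup>2 < e\<^sup>2" using eT T by (intro power_strict_mono) auto
    then show ?thesis by (simp add: power2_eq_square)
  qed
  finally have 1: "b1 * r < e\<^sup>2 / 2" .
  have "b2 * r * e \<le> b2 * \<epsilon> * e" using b2 re e by (intro mult_right_mono mult_left_mono) auto
  also have "\<dots> \<le> T / 4 * e" using h2 e by (rule mult_right_mono)
  also have "\<dots> \<le> e\<^sup>2 / 2"
  proof -
    have "T * e \<le> (2 * e) * e" using eT e by (intro mult_right_mono) auto
    then show ?thesis by (simp add: power2_eq_square)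
  qed
  finally have 2: "b2 * r * e \<le> e\<^sup>2 / 2" .
  from 1 2 q show False by simp
qed

lemma arith_fine:
  fixes e r A1 A2 :: real
  assumes e: "0 \<le> e" and r: "0 \<le> r" and A1: "0 \<le> A1" and A2: "0 \<le> A2"
    and q: "e\<^sup>2 \<le> A1 * r\<^sup>2 + A2 * r * e"
  shows "e \<le> (A1 + A2 + 1) * r"
proof (cases "e \<le> r")
  case True
  have "1 * r \<le> (A1 + A2 + 1) * r" using A1 A2 r by (intro mult_right_mono) auto
  then show ?thesis using True by simp
next
  case False
  then have re: "r < e" by simp
  have "A1 * r\<^sup>2 \<le> A1 * r * e" using A1 r re
    by (simp add: power2_eq_square mult.assoc mult_left_mono mult_right_mono less_imp_le)
  with q have "e * e \<le> ((A1 + A2) * r) * e" by (simp add: power2_eq_square algebra_simps)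
  then have "e \<le> (A1 + A2) * r" using re r by (intro mult_right_le_imp_le[of e e]) auto
  then show ?thesis using r by (simp add: algebra_simps)
qed


context sgda begin

lemma axis_simplex: "axis i 1 \<in> prob_simplex"
  unfolding prob_simplex_def by (auto simp: axis_def)

lemma gradx_axis: "gradx_f G x (axis i 1) = G i x"
  by (simp add: gradx_f_def axis_def if_distrib[of "\<lambda>t. t *\<^sub>R _"] cong: if_cong)

lemma G_bound: "\<exists>Gb\<ge>0. \<forall>i x. norm x \<le> B \<longrightarrow> norm (G i x) \<le> Gb"
proof (intro exI[of _ "(\<Sum>i\<in>UNIV. norm (G i 0)) + L * \<bar>B\<bar>"] conjI allI impI)
  show "0 \<le> (\<Sum>i\<in>UNIV. norm (G i 0)) + L * \<bar>B\<bar>" using Lpos by (simp add: sum_nonneg)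
  fix i x assume x: "norm (x::real^'n) \<le> B"
  have "norm (G i x - G i 0) \<le> L * norm (x - 0)"
    using gx_lip_x[OF axis_simplex[of i], where x=x and x'=0] by (simp add: gradx_axis)
  then have "norm (G i x) \<le> norm (G i 0) + L * norm x" by (smt (verit) diff_zero norm_triangle_ineq2)
  also have "\<dots> \<le> (\<Sum>i\<in>UNIV. norm (G i 0)) + L * \<bar>B\<bar>"
    using x Lpos by (intro add_mono member_le_sum mult_left_mono) auto
  finally show "norm (G i x) \<le> (\<Sum>i\<in>UNIV. norm (G i 0)) + L * \<bar>B\<bar>" .
qed

lemma gap_ineq:
  fixes v :: "real^'m"
  assumes y': "y' \<in> prob_simplex" and opt: "\<forall>w\<in>prob_simplex. v \<bullet> w \<le> v \<bullet> y'"
    and w: "w \<in> prob_simplex"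
  shows "v \<bullet> w + \<eta> * (\<Sum>i\<in>UNIV. if (\<forall>j. v $ j - \<eta> \<le> v $ i) then 0 else w $ i) \<le> v \<bullet> y'"
proof -
  define fm where "fm = Max (range (\<lambda>j. v $ j))"
  have le: "v $ j \<le> fm" for j unfolding fm_def by (rule Max_ge) auto
  have supp: "y' $ i * v $ i = y' $ i * fm" for i
  proof (cases "y' $ i > 0")
    case True
    then have "\<forall>j. v $ j \<le> v $ i" using opt_support[OF y' opt] by blast
    then have "fm = v $ i" unfolding fm_def by (intro Max_eqI) auto
    then show ?thesis by simp
  next
    case False then have "y' $ i = 0" using simplex_nonneg[OF y', of i] by simp
    then show ?thesis by simp
  qed
  have vy: "v \<bullet> y' = fm"
  proof -
    have "v \<bullet> y' = (\<Sum>i\<in>UNIV. y' $ i * v $ i)" by (simp add: inner_vec_def mult.commute)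
    also have "\<dots> = (\<Sum>i\<in>UNIV. y' $ i * fm)" by (rule sum.cong[OF refl supp])
    also have "\<dots> = fm" using simplex_sum[OF y'] by (simp add: sum_distrib_right[symmetric])
    finally show ?thesis .
  qed
  have each: "w $ i * v $ i + \<eta> * (if (\<forall>j. v $ j - \<eta> \<le> v $ i) then 0 else w $ i) \<le> w $ i * fm" for i
  proof (cases "\<forall>j. v $ j - \<eta> \<le> v $ i")
    case True
    then show ?thesis using le[of i] simplex_nonneg[OF w, of i] by (simp add: mult_left_mono)
  next
    case False
    then obtain j where "v $ j - \<eta> > v $ i" by (auto simp: not_le)
    then have "v $ i + \<eta> \<le> fm" using le[of j] by simp
    then have "w $ i * (v $ i + \<eta>) \<le> w $ i * fm" using simplex_nonneg[OF w, of i] by (rule mult_left_mono)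
    then show ?thesis using False by (simp only: if_False) (simp add: algebra_simps)
  qed
  have "v \<bullet> w + \<eta> * (\<Sum>i\<in>UNIV. if (\<forall>j. v $ j - \<eta> \<le> v $ i) then 0 else w $ i)
      = (\<Sum>i\<in>UNIV. w $ i * v $ i + \<eta> * (if (\<forall>j. v $ j - \<eta> \<le> v $ i) then 0 else w $ i))"
    by (simp add: inner_vec_def sum.distrib sum_distrib_left mult.commute)
  also have "\<dots> \<le> (\<Sum>i\<in>UNIV. w $ i * fm)" by (intro sum_mono each)
  also have "\<dots> = fm" using simplex_sum[OF w] by (simp add: sum_distrib_right[symmetric])
  finally show ?thesis using vy by simp
qed

lemma key_ineq:
  fixes \<eta> :: real
  assumes \<alpha>: "\<alpha> > 0" and y: "y \<in> prob_simplex" and y': "y' \<in> prob_simplex"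
    and opt: "\<forall>w\<in>prob_simplex. F (xmin F p y' z) \<bullet> w \<le> F (xmin F p y' z) \<bullet> y'"
  defines "x \<equiv> xmin F p y z" and "x' \<equiv> xmin F p y' z"
  defines "yp \<equiv> projS (y + \<alpha> *\<^sub>R F (xmin F p y z))"
  defines "S \<equiv> (\<Sum>i\<in>UNIV. if (\<forall>j. F x' $ j - \<eta> \<le> F x' $ i) then 0 else yp $ i)"
  shows "\<alpha> * (p - L) * (norm (x - x'))\<^sup>2 + \<alpha> * \<eta> * S \<le> norm (y - yp) * norm (yp - y') + \<alpha> * L * norm (x - x') * norm (y - yp)"
proof -
  define e r where "e = norm (x - x')" and "r = norm (y - yp)"
  have yp: "yp \<in> prob_simplex" unfolding yp_def by (rule projS_in)
  have P: "(y + \<alpha> *\<^sub>R F x - yp) \<bullet> (y' - yp) \<le> 0"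
    unfolding yp_def x_def by (rule projS_dot[OF y'])
  have Mo: "(F x - F x') \<bullet> (y - y') \<le> - ((p - L) * e\<^sup>2)"
    unfolding x_def x'_def e_def by (rule mono_F[OF y y'])
  have Gp: "F x' \<bullet> yp + \<eta> * S \<le> F x' \<bullet> y'"
    unfolding S_def x'_def by (rule gap_ineq[OF y' opt[folded x'_def, unfolded x'_def] yp])
  have CS1: "(yp - y) \<bullet> (y' - yp) \<le> r * norm (yp - y')"
  proof -
    have "(yp - y) \<bullet> (y' - yp) \<le> norm (yp - y) * norm (y' - yp)" by (rule norm_cauchy_schwarz)
    then show ?thesis by (simp add: r_def norm_minus_commute)
  qed
  have CS2: "\<bar>(F x - F x') \<bullet> (y - yp)\<bar> \<le> L * e * r"
  proof -
    have "\<bar>(F x - F x') \<bullet> (y - yp)\<bar> \<le> norm (F x - F x') * norm (y - yp)" by (rule Cauchy_Schwarz_ineq2)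
    also have "\<dots> \<le> L * e * r" unfolding e_def r_def by (intro mult_right_mono F_lip) auto
    finally show ?thesis .
  qed
  have e1: "\<alpha> * (F x \<bullet> (y' - yp)) \<le> (yp - y) \<bullet> (y' - yp)"
    using P by (simp add: inner_add_left inner_diff_left algebra_simps)
  have e2: "F x \<bullet> (y' - yp) = - ((F x - F x') \<bullet> (y - y')) + (F x - F x') \<bullet> (y - yp) + (F x' \<bullet> y' - F x' \<bullet> yp)"
    by (simp add: inner_diff_left inner_diff_right algebra_simps)
  have "F x \<bullet> (y' - yp) \<ge> (p - L) * e\<^sup>2 - L * e * r + \<eta> * S"
    using e2 Mo CS2 Gp by linarith
  then have "\<alpha> * ((p - L) * e\<^sup>2 - L * e * r + \<eta> * S) \<le> \<alpha> * (F x \<bullet> (y' - yp))"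
    using \<alpha> by (intro mult_left_mono) auto
  with e1 CS1 have "\<alpha> * ((p - L) * e\<^sup>2 - L * e * r + \<eta> * S) \<le> r * norm (yp - y')" by linarith
  then show ?thesis unfolding e_def[symmetric] r_def[symmetric] by (simp add: algebra_simps)
qed

end


context sgda begin

lemma scale_bound: fixes b \<epsilon> X :: real assumes "b \<ge> 0" "\<epsilon> \<ge> 0" "\<epsilon> \<le> X / (b + 1)" shows "b * \<epsilon> \<le> X"
proof -
  have "(b + 1) * \<epsilon> = b * \<epsilon> + \<epsilon>" by (simp add: algebra_simps)
  then have "b * \<epsilon> \<le> (b + 1) * \<epsilon>" using assms by linarith
  also have "\<dots> \<le> (b + 1) * (X / (b + 1))" using assms by (intro mult_left_mono) auto
  also have "\<dots> = X" using assms by simp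
  finally show ?thesis .
qed

lemma core:
  assumes SC: "strict_complementarity F G" and \<alpha>: "\<alpha> > 0" and R: "R > 0"
  shows "\<exists>\<epsilon>>0. \<exists>\<sigma>>0. \<forall>z y. norm z \<le> R \<longrightarrow> y \<in> prob_simplex \<longrightarrow> norm (xmin F p y z - z) \<le> \<epsilon> \<longrightarrow>
     norm (y - projS (y + \<alpha> *\<^sub>R F (xmin F p y z))) \<le> \<epsilon> \<longrightarrow>
     norm (xmin F p (projS (y + \<alpha> *\<^sub>R F (xmin F p y z))) z - xstar F p z)
       \<le> \<sigma> * norm (y - projS (y + \<alpha> *\<^sub>R F (xmin F p y z)))"
proof -
  obtain \<theta> \<eta> \<kappa> where \<theta>: "\<theta> > 0" and \<eta>: "\<eta> > 0" and \<kappa>: "\<kappa> > 0" and LQ: "\<forall>x y u. norm x \<le> R + 1 \<longrightarrow> y \<in> prob_simplex \<longrightarrow>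
     (\<forall>i j. y $ i > 0 \<longrightarrow> F x $ j \<le> F x $ i) \<longrightarrow> norm (\<Sum>i\<in>UNIV. y $ i *\<^sub>R G i x) \<le> \<theta> \<longrightarrow>
     (\<forall>i j. u $ i \<noteq> 0 \<longrightarrow> F x $ j - \<eta> \<le> F x $ i) \<longrightarrow>
     \<kappa> * norm u \<le> norm (\<Sum>i\<in>UNIV. u $ i *\<^sub>R G i x) + \<bar>\<Sum>i\<in>UNIV. u $ i\<bar>"
    using licq[OF SC, of "R + 1"] by blast
  obtain Gb where Gb0: "Gb \<ge> 0" and Gb: "\<And>i x. norm x \<le> R + 1 \<Longrightarrow> norm (G i x) \<le> Gb"
    using G_bound[of "R + 1"] by blast
  define \<mu> where "\<mu> = p - L"
  have \<mu>: "\<mu> > 0" using pL by (simp add: \<mu>_def)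
  define M where "M = L / \<mu>"
  have M: "M \<ge> 0" using Lpos \<mu> by (simp add: M_def)
  define T where "T = min 1 (\<theta> / p)"
  have T: "T > 0" "T \<le> 1" "T \<le> \<theta> / p" using \<theta> ppos by (auto simp: T_def)
  define b1 where "b1 = 2 / (\<alpha> * \<mu>)"
  define b2 where "b2 = L / \<mu>"
  have b1: "b1 \<ge> 0" and b2: "b2 \<ge> 0" using \<alpha> \<mu> Lpos by (auto simp: b1_def b2_def)
  define k3 where "k3 = (Gb + 1) / \<kappa> + 1"
  have k3: "k3 > 0" using Gb0 \<kappa> by (simp add: k3_def add_pos_nonneg)
  define \<epsilon> where "\<epsilon> = min (T / 2) (min (T / 4 / (b2 + 1)) (min (T\<^sup>2 / 8 / (b1 + 1)) (\<alpha> * \<eta> / k3)))"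
  have \<epsilon>: "\<epsilon> > 0" using T b1 b2 \<alpha> \<eta> k3 by (simp add: \<epsilon>_def)
  have \<epsilon>1: "\<epsilon> \<le> T / 2" unfolding \<epsilon>_def by (rule min.cobounded1)
  have \<epsilon>2: "b2 * \<epsilon> \<le> T / 4" using \<epsilon> b2 by (intro scale_bound) (auto simp: \<epsilon>_def)
  have \<epsilon>3: "b1 * \<epsilon> \<le> T\<^sup>2 / 8" using \<epsilon> b1 by (intro scale_bound) (auto simp: \<epsilon>_def)
  have \<epsilon>4: "\<epsilon> * k3 \<le> \<alpha> * \<eta>"
  proof -
    have "\<epsilon> \<le> \<alpha> * \<eta> / k3" by (simp add: \<epsilon>_def)
    then show ?thesis using k3 by (simp add: pos_le_divide_eq)
  qed
  define A1 where "A1 = (L + p) * M / (\<kappa> * \<alpha> * \<mu>)"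
  define A2 where "A2 = ((L + p) / \<kappa> + \<alpha> * L) / (\<alpha> * \<mu>)"
  have A1: "A1 \<ge> 0" and A2: "A2 \<ge> 0" using Lpos ppos M \<kappa> \<alpha> \<mu> by (auto simp: A1_def A2_def)
  define \<sigma> where "\<sigma> = M + A1 + A2 + 1"
  have \<sigma>: "\<sigma> > 0" using M A1 A2 by (simp add: \<sigma>_def add_pos_nonneg)
  show ?thesis
  proof (rule exI[of _ \<epsilon>], rule conjI[OF \<epsilon>], rule exI[of _ \<sigma>], rule conjI[OF \<sigma>], intro allI impI)
    fix z :: "real^'n" and y :: "real^'m" assume hz: "norm z \<le> R" and hy: "y \<in> prob_simplex"
      and hx: "norm (xmin F p y z - z) \<le> \<epsilon>" and hr: "norm (y - projS (y + \<alpha> *\<^sub>R F (xmin F p y z))) \<le> \<epsilon>"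
    define x where "x = xmin F p y z"
    define yp where "yp = projS (y + \<alpha> *\<^sub>R F (xmin F p y z))"
    define r where "r = norm (y - yp)"
    define xp where "xp = xmin F p yp z"
    have yp: "yp \<in> prob_simplex" unfolding yp_def by (rule projS_in)
    have r0: "r \<ge> 0" by (simp add: r_def)
    have r\<epsilon>: "r \<le> \<epsilon>" using hr by (simp add: r_def yp_def)
    obtain y' where y': "y' \<in> prob_simplex"
      and opt: "\<forall>w\<in>prob_simplex. F (xmin F p y' z) \<bullet> w \<le> F (xmin F p y' z) \<bullet> y'"
      and xs: "xstar F p z = xmin F p y' z"
      using dual_sol by blast
    define x' where "x' = xmin F p y' z"
    define e where "e = norm (x - x')"
    have e0: "e \<ge> 0" by (simp add: e_def)
    define Aix where "Aix = (\<lambda>i. \<forall>j. F x' $ j - \<eta> \<le> F x' $ i)"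
    define S where "S = (\<Sum>i\<in>UNIV. if Aix i then 0 else yp $ i)"
    have S0: "S \<ge> 0" unfolding S_def using simplex_nonneg[OF yp] by (intro sum_nonneg) auto
    have key: "\<alpha> * \<mu> * e\<^sup>2 + \<alpha> * \<eta> * S \<le> r * norm (yp - y') + \<alpha> * L * e * r"
      using key_ineq[OF \<alpha> hy y' opt, of \<eta>]
      unfolding S_def Aix_def e_def r_def yp_def x_def x'_def \<mu>_def by simp
    have nv2: "norm (yp - y') \<le> 2"
      using norm_triangle_ineq4[of yp y'] simplex_norm[OF yp] simplex_norm[OF y'] by linarith
    have "\<alpha> * \<mu> * e\<^sup>2 \<le> r * 2 + \<alpha> * L * e * r"
    proof -
      have "r * norm (yp - y') \<le> r * 2" by (rule mult_left_mono[OF nv2 r0])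
      moreover have "0 \<le> \<alpha> * \<eta> * S" using \<alpha> \<eta> S0 by simp
      ultimately show ?thesis using key by linarith
    qed
    then have "e\<^sup>2 \<le> (r * 2 + \<alpha> * L * e * r) / (\<alpha> * \<mu>)"
      using \<alpha> \<mu> by (simp add: pos_le_divide_eq mult.commute)
    also have "\<dots> = b1 * r + b2 * r * e" using \<alpha> \<mu> by (simp add: b1_def b2_def field_simps)
    finally have rough: "e\<^sup>2 \<le> b1 * r + b2 * r * e" .
    have eT: "e \<le> T / 2" by (rule arith_rough[OF e0 r0 T(1) b1 b2 r\<epsilon> \<epsilon>2 \<epsilon>3 rough])
    have nz: "norm (x' - z) \<le> T"
    proof -
      have "norm (x' - z) \<le> norm (x' - x) + norm (x - z)" using norm_triangle_ineq[of "x' - x" "x - z"] by simp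
      also have "\<dots> \<le> T / 2 + T / 2" using eT hx \<epsilon>1 by (simp add: e_def x_def norm_minus_commute)
      finally show ?thesis by simp
    qed
    have nx': "norm x' \<le> R + 1"
    proof -
      have "norm x' \<le> norm (x' - z) + norm z" using norm_triangle_ineq[of "x' - z" z] by simp
      then show ?thesis using nz hz T by linarith
    qed
    have stat': "gradx_f G x' y' = - (p *\<^sub>R (x' - z))"
      using xmin_stat[OF y', of z] unfolding x'_def[symmetric] gradx_K_def by (simp add: eq_neg_iff_add_eq_0)
    have statp: "gradx_f G xp yp = - (p *\<^sub>R (xp - z))"
      using xmin_stat[OF yp, of z] unfolding xp_def[symmetric] gradx_K_def by (simp add: eq_neg_iff_add_eq_0)
    have th: "norm (\<Sum>i\<in>UNIV. y' $ i *\<^sub>R G i x') \<le> \<theta>"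
    proof -
      have "norm (\<Sum>i\<in>UNIV. y' $ i *\<^sub>R G i x') = p * norm (x' - z)"
        using stat' ppos by (simp add: gradx_f_def)
      also have "\<dots> \<le> p * (\<theta> / p)" using nz T ppos by (intro mult_left_mono) auto
      finally show ?thesis using ppos by simp
    qed
    have supp: "\<forall>i j. y' $ i > 0 \<longrightarrow> F x' $ j \<le> F x' $ i"
      using opt_support[OF y' opt[folded x'_def]] by blast
    have y'0: "y' $ i = 0" if "\<not> Aix i" for i
    proof (rule ccontr)
      assume "y' $ i \<noteq> 0"
      then have "y' $ i > 0" using simplex_nonneg[OF y', of i] by simp
      then have "Aix i" using supp \<eta> unfolding Aix_def by (smt (verit))
      with that show False by simp
    qed
    define u where "u = (\<chi> i. if Aix i then (yp - y') $ i else 0)"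
    define w where "w = (\<chi> i. if Aix i then 0 else yp $ i)"
    have vuw: "yp - y' = u + w" using y'0 by (auto simp: vec_eq_iff u_def w_def)
    have usupp: "\<forall>i j. u $ i \<noteq> 0 \<longrightarrow> F x' $ j - \<eta> \<le> F x' $ i"
      by (auto simp: u_def Aix_def split: if_splits)
    have LQu: "\<kappa> * norm u \<le> norm (\<Sum>i\<in>UNIV. u $ i *\<^sub>R G i x') + \<bar>\<Sum>i\<in>UNIV. u $ i\<bar>"
      using LQ nx' y' supp th usupp by blast
    have sw: "(\<Sum>i\<in>UNIV. w $ i) = S" by (simp add: w_def S_def)
    have w0: "w $ i \<ge> 0" for i using simplex_nonneg[OF yp] by (simp add: w_def)
    have sv: "(\<Sum>i\<in>UNIV. (yp - y') $ i) = 0"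
      using simplex_sum[OF yp] simplex_sum[OF y'] by (simp add: sum_subtractf)
    have su: "\<bar>\<Sum>i\<in>UNIV. u $ i\<bar> = S"
    proof -
      have "(\<Sum>i\<in>UNIV. (yp - y') $ i) = (\<Sum>i\<in>UNIV. u $ i) + (\<Sum>i\<in>UNIV. w $ i)"
        by (simp add: vuw sum.distrib)
      then show ?thesis using sv sw S0 by simp
    qed
    have nw: "norm w \<le> S"
    proof -
      have "norm w \<le> (\<Sum>i\<in>UNIV. \<bar>w $ i\<bar>)" by (rule norm_le_l1_cart)
      also have "\<dots> = S" using w0 sw by simp
      finally show ?thesis .
    qed
    have nwG: "norm (\<Sum>i\<in>UNIV. w $ i *\<^sub>R G i x') \<le> S * Gb"
    proof -
      have "norm (\<Sum>i\<in>UNIV. w $ i *\<^sub>R G i x') \<le> (\<Sum>i\<in>UNIV. norm (w $ i *\<^sub>R G i x'))" by (rule norm_sum)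
      also have "\<dots> \<le> (\<Sum>i\<in>UNIV. w $ i * Gb)"
        using w0 Gb[OF nx'] by (intro sum_mono) (simp add: mult_left_mono)
      also have "\<dots> = S * Gb" using sw by (simp add: sum_distrib_right[symmetric])
      finally show ?thesis .
    qed
    have nxp: "norm (xp - x') \<le> M * r + e"
    proof -
      have "norm (xp - x) \<le> L / (p - L) * norm (yp - y)"
        unfolding xp_def x_def by (rule xmin_lip[OF yp hy])
      then have "norm (xp - x) \<le> M * r" by (simp add: M_def \<mu>_def r_def norm_minus_commute)
      moreover have "norm (xp - x') \<le> norm (xp - x) + norm (x - x')" using norm_triangle_ineq[of "xp - x" "x - x'"] by simp
      ultimately show ?thesis by (simp add: e_def)
    qed
    have nvG: "norm (\<Sum>i\<in>UNIV. (yp - y') $ i *\<^sub>R G i x') \<le> (L + p) * (M * r + e)"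
    proof -
      have "(\<Sum>i\<in>UNIV. (yp - y') $ i *\<^sub>R G i x') = gradx_f G x' yp - gradx_f G x' y'"
        by (simp add: gradx_f_def scaleR_diff_left sum_subtractf)
      also have "\<dots> = (gradx_f G x' yp - gradx_f G xp yp) - p *\<^sub>R (xp - x')"
        using stat' statp by (simp add: algebra_simps)
      finally have eq: "(\<Sum>i\<in>UNIV. (yp - y') $ i *\<^sub>R G i x') = (gradx_f G x' yp - gradx_f G xp yp) - p *\<^sub>R (xp - x')" .
      have "norm ((gradx_f G x' yp - gradx_f G xp yp) - p *\<^sub>R (xp - x')) \<le>
          norm (gradx_f G x' yp - gradx_f G xp yp) + norm (p *\<^sub>R (xp - x'))" by (rule norm_triangle_ineq4)
      also have "\<dots> \<le> L * norm (xp - x') + p * norm (xp - x')"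
        using gx_lip_x[OF yp, of x' xp] ppos by (simp add: norm_minus_commute)
      also have "\<dots> = (L + p) * norm (xp - x')" by (simp add: algebra_simps)
      also have "\<dots> \<le> (L + p) * (M * r + e)" using nxp Lpos ppos by (intro mult_left_mono) auto
      finally show ?thesis using eq by simp
    qed
    have nuG: "norm (\<Sum>i\<in>UNIV. u $ i *\<^sub>R G i x') \<le> (L + p) * (M * r + e) + S * Gb"
    proof -
      have "(\<Sum>i\<in>UNIV. u $ i *\<^sub>R G i x') = (\<Sum>i\<in>UNIV. (yp - y') $ i *\<^sub>R G i x') - (\<Sum>i\<in>UNIV. w $ i *\<^sub>R G i x')"
        by (simp add: vuw scaleR_add_left sum.distrib)
      then have "norm (\<Sum>i\<in>UNIV. u $ i *\<^sub>R G i x') \<le> norm (\<Sum>i\<in>UNIV. (yp - y') $ i *\<^sub>R G i x') + norm (\<Sum>i\<in>UNIV. w $ i *\<^sub>R G i x')"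
        by (simp add: norm_triangle_ineq4)
      then show ?thesis using nvG nwG by linarith
    qed
    define Q where "Q = (L + p) * (M * r + e) / \<kappa>"
    have nu: "norm u \<le> Q + S * ((Gb + 1) / \<kappa>)"
    proof -
      have "\<kappa> * norm u \<le> (L + p) * (M * r + e) + S * (Gb + 1)" using LQu nuG su by (simp add: algebra_simps)
      then have "norm u \<le> ((L + p) * (M * r + e) + S * (Gb + 1)) / \<kappa>" using \<kappa> by (simp add: pos_le_divide_eq mult.commute)
      then show ?thesis by (simp add: Q_def add_divide_distrib[symmetric] times_divide_eq_right)
    qed
    have nv: "norm (yp - y') \<le> Q + S * k3"
    proof -
      have "norm (yp - y') \<le> norm u + norm w" unfolding vuw by (rule norm_triangle_ineq)
      then show ?thesis using nu nw by (simp add: k3_def algebra_simps)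
    qed
    have rS: "r * (S * k3) \<le> \<alpha> * \<eta> * S"
    proof -
      have "r * k3 \<le> \<epsilon> * k3" using r\<epsilon> k3 by (simp add: mult_right_mono)
      then have "r * k3 \<le> \<alpha> * \<eta>" using \<epsilon>4 by linarith
      then have "(r * k3) * S \<le> (\<alpha> * \<eta>) * S" using S0 by (rule mult_right_mono)
      then show ?thesis by (simp add: algebra_simps)
    qed
    have "r * norm (yp - y') \<le> r * (Q + S * k3)" using nv r0 by (rule mult_left_mono)
    then have "\<alpha> * \<mu> * e\<^sup>2 \<le> r * Q + \<alpha> * L * e * r" using key rS by (simp add: algebra_simps)
    then have "e\<^sup>2 \<le> (r * Q + \<alpha> * L * e * r) / (\<alpha> * \<mu>)"
      using \<alpha> \<mu> by (simp add: pos_le_divide_eq mult.commute)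
    also have "\<dots> = A1 * r\<^sup>2 + A2 * r * e"
      using \<alpha> \<mu> \<kappa> by (simp add: A1_def A2_def Q_def field_simps power2_eq_square)
    finally have fine: "e\<^sup>2 \<le> A1 * r\<^sup>2 + A2 * r * e" .
    have ef: "e \<le> (A1 + A2 + 1) * r" by (rule arith_fine[OF e0 r0 A1 A2 fine])
    have "norm (xp - x') \<le> \<sigma> * r" using nxp ef by (simp add: \<sigma>_def algebra_simps)
    then show "norm (xmin F p (projS (y + \<alpha> *\<^sub>R F (xmin F p y z))) z - xstar F p z)
       \<le> \<sigma> * norm (y - projS (y + \<alpha> *\<^sub>R F (xmin F p y z)))"
      by (simp add: xp_def yp_def r_def xs x'_def)
  qed
qed

end


theorem lemma1:
  fixes F :: "real^'n \<Rightarrow> real^'m"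
    and G :: "'m \<Rightarrow> real^'n \<Rightarrow> real^'n"
    and L c \<alpha> p \<beta> R :: real
    and xs zs :: "nat \<Rightarrow> real^'n"
    and ys :: "nat \<Rightarrow> real^'m"
  assumes smooth: "\<And>i x. ((\<lambda>u. F u $ i) has_derivative (\<lambda>h. G i x \<bullet> h)) (at x)"
    and contgrad: "\<And>i. continuous_on UNIV (G i)"
    and A: "assumptionA F G L"
    and SC: "strict_complementarity F G"
    and c: "c > 0" and \<alpha>: "\<alpha> > 0" and p: "p > L" and \<beta>: "0 < \<beta>" "\<beta> \<le> 1"
    and y0: "ys 0 \<in> prob_simplex"
    and xstep: "\<And>t. xs (Suc t) = xs t - c *\<^sub>R gradx_K G p (xs t) (zs t) (ys t)"
    and ystep: "\<And>t. ys (Suc t) = projS (ys t + \<alpha> *\<^sub>R grady_K F p (xs (Suc t)) (zs t) (ys t))"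
    and zstep: "\<And>t. zs (Suc t) = zs t + \<beta> *\<^sub>R (xs (Suc t) - zs t)"
    and R: "R > 0" and zbound: "\<And>t. norm (zs t) \<le> R"
  shows "\<exists>\<delta> \<sigma>5. \<delta> > 0 \<and> \<sigma>5 > 0 \<and>
    (\<forall>t. let yplus = projS (ys t + \<alpha> *\<^sub>R grady_K F p (xmin F p (ys t) (zs t)) (zs t) (ys t)) in
       max (norm (xs t - xs (Suc t))) (max (norm (ys t - yplus)) (norm (xs (Suc t) - zs t))) \<le> \<delta>
       \<longrightarrow> norm (xmin F p yplus (zs t) - xstar F p (zs t)) \<le> \<sigma>5 * norm (ys t - yplus))"
proof -
  interpret sgda F G L p
    by (rule sgda.intro) (use smooth contgrad A p in auto)
  obtain \<epsilon> \<sigma> where \<epsilon>: "\<epsilon> > 0" and \<sigma>: "\<sigma> > 0" and core: "\<forall>z y. norm z \<le> R \<longrightarrow> y \<in> prob_simplex \<longrightarrow> norm (xmin F p y z - z) \<le> \<epsilon> \<longrightarrow>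
     norm (y - projS (y + \<alpha> *\<^sub>R F (xmin F p y z))) \<le> \<epsilon> \<longrightarrow>
     norm (xmin F p (projS (y + \<alpha> *\<^sub>R F (xmin F p y z))) z - xstar F p z)
       \<le> \<sigma> * norm (y - projS (y + \<alpha> *\<^sub>R F (xmin F p y z)))"
    using core[OF SC \<alpha> R] by blast
  have ysS: "ys t \<in> prob_simplex" for t
  proof (cases t)
    case 0 then show ?thesis using y0 by simp
  next
    case (Suc s) then show ?thesis using ystep[of s] projS_in by simp
  qed
  define cc where "cc = 2 + 1 / (c * (p - L))"
  have cc: "cc > 0" using c p by (simp add: cc_def add_pos_nonneg)
  have cc1: "cc \<ge> 1" using c p by (simp add: cc_def)
  define \<delta> where "\<delta> = \<epsilon> / cc"
  have \<delta>: "\<delta> > 0" using \<epsilon> cc by (simp add: \<delta>_def)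
  have \<delta>\<epsilon>: "\<delta> \<le> \<epsilon>"
  proof -
    have "\<epsilon> * 1 \<le> \<epsilon> * cc" using cc1 \<epsilon> by (intro mult_left_mono) auto
    then show ?thesis using cc by (simp add: \<delta>_def pos_divide_le_eq)
  qed
  have \<delta>cc: "\<delta> * cc = \<epsilon>" using cc by (simp add: \<delta>_def)
  show ?thesis
  proof (rule exI[of _ \<delta>], rule exI[of _ \<sigma>], intro conjI \<delta> \<sigma> allI, unfold Let_def, rule impI)
    fix t
    define x where "x = xmin F p (ys t) (zs t)"
    define yp where "yp = projS (ys t + \<alpha> *\<^sub>R F x)"
    assume h: "max (norm (xs t - xs (Suc t)))
          (max (norm (ys t - projS (ys t + \<alpha> *\<^sub>R grady_K F p (xmin F p (ys t) (zs t)) (zs t) (ys t))))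
            (norm (xs (Suc t) - zs t))) \<le> \<delta>"
    have gy: "grady_K F p (xmin F p (ys t) (zs t)) (zs t) (ys t) = F x"
      by (simp add: grady_K_def grady_f_def x_def)
    have h1: "norm (xs t - xs (Suc t)) \<le> \<delta>" and h2: "norm (ys t - yp) \<le> \<delta>"
      and h3: "norm (xs (Suc t) - zs t) \<le> \<delta>" using h by (auto simp: gy yp_def)
    have gk: "gradx_K G p (xs t) (zs t) (ys t) = (1 / c) *\<^sub>R (xs t - xs (Suc t))"
      using xstep[of t] c by simp
    have "(p - L) * norm (xs t - x) \<le> norm (gradx_K G p (xs t) (zs t) (ys t))"
      unfolding x_def by (rule xdist_grad[OF ysS])
    also have "\<dots> = norm (xs t - xs (Suc t)) / c" using c by (simp add: gk)
    finally have q: "(p - L) * norm (xs t - x) \<le> norm (xs t - xs (Suc t)) / c" .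
    have "norm (xs t - x) \<le> norm (xs t - xs (Suc t)) / c / (p - L)"
      using p q by (subst pos_le_divide_eq) (auto simp: mult.commute)
    also have "\<dots> \<le> \<delta> / c / (p - L)" using h1 c p by (intro divide_right_mono) auto
    finally have hx: "norm (xs t - x) \<le> \<delta> / (c * (p - L))" by simp
    have "norm (x - zs t) \<le> norm (x - xs t) + norm (xs t - xs (Suc t)) + norm (xs (Suc t) - zs t)"
      using norm_triangle_ineq[of "x - xs t" "xs t - xs (Suc t)"] norm_triangle_ineq[of "x - xs (Suc t)" "xs (Suc t) - zs t"]
      by simp
    also have "\<dots> \<le> \<delta> / (c * (p - L)) + \<delta> + \<delta>" using hx h1 h3 by (simp add: norm_minus_commute)
    also have "\<dots> = \<delta> * cc" by (simp add: cc_def algebra_simps)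
    finally have hxz: "norm (x - zs t) \<le> \<epsilon>" using \<delta>cc by simp
    have "norm (xmin F p yp (zs t) - xstar F p (zs t)) \<le> \<sigma> * norm (ys t - yp)"
      using core zbound[of t] ysS[of t] hxz h2 \<delta>\<epsilon> unfolding yp_def x_def by auto
    then show "norm (xmin F p (projS (ys t + \<alpha> *\<^sub>R grady_K F p (xmin F p (ys t) (zs t)) (zs t) (ys t))) (zs t) - xstar F p (zs t))
        \<le> \<sigma> * norm (ys t - projS (ys t + \<alpha> *\<^sub>R grady_K F p (xmin F p (ys t) (zs t)) (zs t) (ys t)))"
      by (simp add: gy yp_def)
  qed
qed


end
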